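(* Suppose there exist an affine plane $\mathrm{AG}(2,k)$ and a resolvable balanced incomplete block design $\mathrm{RBIBD}(v,k,1)$. Then there exists an $\mathrm{RBIBD}(kv,k,1)$ $\mathcal{D}^*$ such that $1$-$\mathrm{BIG}(\mathcal{D}^* )$ is silver.
   Context: A $2$-$(v,k,\lambda)$ design ($2<k<v$) is a pair $(V,\mathcal{B})$ with $|V|=v$ and $\mathcal{B}$ a collection of $k$-subsets of $V$ (blocks) such that every $2$-subset of $V$ lies in exactly $\lambda$ blocks. A parallel class is a set of blocks partitioning $V$. An $\mathrm{RBIBD}(v,k,\lambda)$ is a $2$-$(v,k,\lambda)$ design whose blocks can be partitioned into parallel classes. An affine plane $\mathrm{AG}(2,n)$ is a $2$-$(n^2,n,1)$ design. The $1$-block intersection graph $1$-$\mathrm{BIG}(\mathcal{D})$ has the blocks as vertices, two blocks adjacent iff they intersect in exactly one element. An $\alpha$-set of a graph is a maximum independent set. Let $G$ be an $r$-regular graph and $c$ a proper $(r+1)$-coloring of $G$. A vertex $x$ is rainbow with respect to $c$ if every one of the $r+1$ colors appears on $N[x]=N(x)\cup\{x\}$. Given an $\alpha$-set $I$, $c$ is silver with respect to $I$ if every $x\in I$ is rainbow; $G$ is silver if it admits a silver coloring with respect to some $\alpha$-set. *)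

theory Defs
  imports Main
begin

text \<open>A 2-(v,k,lambda) design on point set V with block collection B
  (blocks form a set; for lambda = 1 repeated blocks are impossible anyway).\<close>
definition design2 :: "'a set \<Rightarrow> 'a set set \<Rightarrow> nat \<Rightarrow> nat \<Rightarrow> nat \<Rightarrow> bool" where
  "design2 V B v k lam \<longleftrightarrow>
     finite V \<and> card V = v \<and> 2 < k \<and> k < v \<and>
     (\<forall>b\<in>B. b \<subseteq> V \<and> card b = k) \<and>
     (\<forall>x\<in>V. \<forall>y\<in>V. x \<noteq> y \<longrightarrow> card {b\<in>B. x \<in> b \<and> y \<in> b} = lam)"

definition parallel_class :: "'a set \<Rightarrow> 'a set set \<Rightarrow> bool" where
  "parallel_class V C \<longleftrightarrow> \<Union>C = V \<and> (\<forall>b\<in>C. \<forall>b'\<in>C. b \<noteq> b' \<longrightarrow> b \<inter> b' = {})"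

definition resolvable :: "'a set \<Rightarrow> 'a set set \<Rightarrow> bool" where
  "resolvable V B \<longleftrightarrow> (\<exists>P. \<Union>P = B \<and> (\<forall>C\<in>P. C \<noteq> {} \<and> parallel_class V C) \<and>
       (\<forall>C\<in>P. \<forall>C'\<in>P. C \<noteq> C' \<longrightarrow> C \<inter> C' = {}))"

definition RBIBD :: "'a set \<Rightarrow> 'a set set \<Rightarrow> nat \<Rightarrow> nat \<Rightarrow> nat \<Rightarrow> bool" where
  "RBIBD V B v k lam \<longleftrightarrow> design2 V B v k lam \<and> resolvable V B"

definition affine_plane :: "'a set \<Rightarrow> 'a set set \<Rightarrow> nat \<Rightarrow> bool" where
  "affine_plane V B n \<longleftrightarrow> design2 V B (n^2) n 1"

definition one_BIG_adj :: "'a set set \<Rightarrow> 'a set \<Rightarrow> 'a set \<Rightarrow> bool" where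
  "one_BIG_adj B b b' \<longleftrightarrow> b \<in> B \<and> b' \<in> B \<and> b \<noteq> b' \<and> card (b \<inter> b') = 1"

definition nbhd :: "'v set \<Rightarrow> ('v \<Rightarrow> 'v \<Rightarrow> bool) \<Rightarrow> 'v \<Rightarrow> 'v set" where
  "nbhd V E x = {y\<in>V. E x y}"

definition regular :: "'v set \<Rightarrow> ('v \<Rightarrow> 'v \<Rightarrow> bool) \<Rightarrow> nat \<Rightarrow> bool" where
  "regular V E r \<longleftrightarrow> (\<forall>x\<in>V. card (nbhd V E x) = r)"

definition independent :: "'v set \<Rightarrow> ('v \<Rightarrow> 'v \<Rightarrow> bool) \<Rightarrow> 'v set \<Rightarrow> bool" where
  "independent V E I \<longleftrightarrow> I \<subseteq> V \<and> (\<forall>x\<in>I. \<forall>y\<in>I. \<not> E x y)"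

definition alpha_set :: "'v set \<Rightarrow> ('v \<Rightarrow> 'v \<Rightarrow> bool) \<Rightarrow> 'v set \<Rightarrow> bool" where
  "alpha_set V E I \<longleftrightarrow> independent V E I \<and> (\<forall>J. independent V E J \<longrightarrow> card J \<le> card I)"

definition proper_coloring :: "'v set \<Rightarrow> ('v \<Rightarrow> 'v \<Rightarrow> bool) \<Rightarrow> nat \<Rightarrow> ('v \<Rightarrow> nat) \<Rightarrow> bool" where
  "proper_coloring V E m c \<longleftrightarrow> (\<forall>x\<in>V. c x < m) \<and> (\<forall>x\<in>V. \<forall>y\<in>V. E x y \<longrightarrow> c x \<noteq> c y)"

definition rainbow :: "'v set \<Rightarrow> ('v \<Rightarrow> 'v \<Rightarrow> bool) \<Rightarrow> nat \<Rightarrow> ('v \<Rightarrow> nat) \<Rightarrow> 'v \<Rightarrow> bool" where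
  "rainbow V E m c x \<longleftrightarrow> c ` (insert x (nbhd V E x)) = {0..<m}"

definition silver :: "'v set \<Rightarrow> ('v \<Rightarrow> 'v \<Rightarrow> bool) \<Rightarrow> bool" where
  "silver V E \<longleftrightarrow> (\<exists>r. regular V E r \<and>
     (\<exists>I c. alpha_set V E I \<and> proper_coloring V E (r+1) c \<and> (\<forall>x\<in>I. rainbow V E (r+1) c x)))"

end

theory Submission
  imports Defs
begin

lemma d2_finite_blocks:
  assumes "design2 W D n k 1"
  shows "finite W" "finite D" "\<And>b. b \<in> D \<Longrightarrow> b \<subseteq> W" "\<And>b. b \<in> D \<Longrightarrow> card b = k"
    "\<And>b. b \<in> D \<Longrightarrow> finite b"
proof -
  show fW: "finite W" using assms unfolding design2_def by auto
  show sub: "\<And>b. b \<in> D \<Longrightarrow> b \<subseteq> W" using assms unfolding design2_def by auto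
  show "\<And>b. b \<in> D \<Longrightarrow> card b = k" using assms unfolding design2_def by auto
  have "D \<subseteq> Pow W" using sub by auto
  then show "finite D" using fW finite_subset by blast
  show "\<And>b. b \<in> D \<Longrightarrow> finite b" using sub fW finite_subset by blast
qed

lemma d2_unique:
  assumes "design2 W D n k 1" "x \<in> W" "y \<in> W" "x \<noteq> y"
  shows "\<exists>!b. b \<in> D \<and> x \<in> b \<and> y \<in> b"
proof -
  have "card {b\<in>D. x \<in> b \<and> y \<in> b} = 1" using assms unfolding design2_def by auto
  then obtain b0 where "{b\<in>D. x \<in> b \<and> y \<in> b} = {b0}" by (erule card_1_singletonE)
  then show ?thesis by (auto simp: set_eq_iff)
qed

lemma d2_meet:
  assumes "design2 W D n k 1" "b \<in> D" "b' \<in> D" "x \<in> b" "y \<in> b" "x \<in> b'" "y \<in> b'" "x \<noteq> y"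
  shows "b = b'"
proof -
  have "x \<in> W" "y \<in> W" using assms d2_finite_blocks(3)[OF assms(1)] by auto
  then show ?thesis using d2_unique[OF assms(1) _ _ assms(8)] assms by blast
qed

lemma d2_inter_le1:
  assumes "design2 W D n k 1" "b \<in> D" "b' \<in> D" "b \<noteq> b'"
  shows "card (b \<inter> b') \<le> 1"
proof -
  have "finite (b \<inter> b')" using d2_finite_blocks(5)[OF assms(1) assms(2)] by auto
  moreover have "\<forall>x\<in>b \<inter> b'. \<forall>y\<in>b \<inter> b'. x = y"
    using d2_meet[OF assms(1) assms(2) assms(3)] assms(4) by blast
  ultimately show ?thesis using card_le_Suc0_iff_eq by auto
qed

lemma d2_adj_iff:
  assumes "design2 W D n k 1"
  shows "one_BIG_adj D b b' \<longleftrightarrow> b \<in> D \<and> b' \<in> D \<and> b \<noteq> b' \<and> b \<inter> b' \<noteq> {}"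
proof
  assume "one_BIG_adj D b b'"
  then show "b \<in> D \<and> b' \<in> D \<and> b \<noteq> b' \<and> b \<inter> b' \<noteq> {}"
    unfolding one_BIG_adj_def by auto
next
  assume h: "b \<in> D \<and> b' \<in> D \<and> b \<noteq> b' \<and> b \<inter> b' \<noteq> {}"
  then have "card (b \<inter> b') \<le> 1" using d2_inter_le1[OF assms] by auto
  moreover have "finite (b \<inter> b')" using d2_finite_blocks(5)[OF assms] h by auto
  moreover have "card (b \<inter> b') \<noteq> 0" using h calculation(2) by (simp add: card_eq_0_iff)
  ultimately have "card (b \<inter> b') = 1" by linarith
  then show "one_BIG_adj D b b'" using h unfolding one_BIG_adj_def by blast
qed

lemma d2_replication:
  assumes "design2 W D n k 1" "p \<in> W"
  shows "card {b\<in>D. p \<in> b} * (k - 1) = n - 1"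
proof -
  let ?S = "{b\<in>D. p \<in> b}"
  have fD: "finite D" using d2_finite_blocks[OF assms(1)] by auto
  have cW: "card W = n" using assms(1) unfolding design2_def by auto
  have eq: "W - {p} = (\<Union>b\<in>?S. b - {p})"
  proof
    show "W - {p} \<subseteq> (\<Union>b\<in>?S. b - {p})"
    proof
      fix q assume "q \<in> W - {p}"
      then obtain b where "b \<in> D" "p \<in> b" "q \<in> b" using d2_unique[OF assms(1) assms(2), of q] by auto
      then show "q \<in> (\<Union>b\<in>?S. b - {p})" using \<open>q \<in> W - {p}\<close> by auto
    qed
    show "(\<Union>b\<in>?S. b - {p}) \<subseteq> W - {p}" using d2_finite_blocks(3)[OF assms(1)] by auto
  qed
  have "card (\<Union>b\<in>?S. b - {p}) = (\<Sum>b\<in>?S. card (b - {p}))"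
  proof (rule card_UN_disjoint)
    show "finite ?S" using fD by auto
    show "\<forall>i\<in>?S. finite (i - {p})" using d2_finite_blocks(5)[OF assms(1)] by auto
    show "\<forall>i\<in>?S. \<forall>j\<in>?S. i \<noteq> j \<longrightarrow> (i - {p}) \<inter> (j - {p}) = {}"
      using d2_meet[OF assms(1)] by blast
  qed
  also have "\<dots> = (\<Sum>b\<in>?S. k - 1)"
    using d2_finite_blocks(4,5)[OF assms(1)] by (intro sum.cong) auto
  also have "\<dots> = card ?S * (k - 1)" by simp
  moreover have "card (W - {p}) = n - 1" using cW assms(2) d2_finite_blocks(1)[OF assms(1)] by (simp add: card_Diff_singleton)
  ultimately show ?thesis using eq by simp
qed

lemma d2_regular:
  assumes "design2 W D n k 1"
  shows "regular D (one_BIG_adj D) (k * ((n - 1) div (k - 1) - 1))"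
  unfolding regular_def
proof
  fix b assume bD: "b \<in> D"
  let ?R = "(n - 1) div (k - 1)"
  have k2: "k > 2" using assms unfolding design2_def by auto
  have rep: "\<And>p. p \<in> W \<Longrightarrow> card {b\<in>D. p \<in> b} = ?R"
  proof -
    fix p assume "p \<in> W"
    have e: "card {b\<in>D. p \<in> b} * (k - 1) = n - 1" using d2_replication[OF assms \<open>p \<in> W\<close>] .
    have "k - 1 \<noteq> 0" using k2 by simp
    then show "card {b\<in>D. p \<in> b} = ?R" using e by (metis nonzero_mult_div_cancel_right)
  qed
  have fD: "finite D" using d2_finite_blocks[OF assms] by auto
  have eq: "nbhd D (one_BIG_adj D) b = (\<Union>p\<in>b. {b'\<in>D. p \<in> b'} - {b})"
    unfolding nbhd_def d2_adj_iff[OF assms] using bD by auto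
  have "card (\<Union>p\<in>b. {b'\<in>D. p \<in> b'} - {b}) = (\<Sum>p\<in>b. card ({b'\<in>D. p \<in> b'} - {b}))"
  proof (rule card_UN_disjoint)
    show "finite b" using d2_finite_blocks(5)[OF assms bD] .
    show "\<forall>i\<in>b. finite ({b'\<in>D. i \<in> b'} - {b})" using fD by auto
    show "\<forall>i\<in>b. \<forall>j\<in>b. i \<noteq> j \<longrightarrow> ({b'\<in>D. i \<in> b'} - {b}) \<inter> ({b'\<in>D. j \<in> b'} - {b}) = {}"
      using d2_meet[OF assms _ bD] by blast
  qed
  also have "\<dots> = (\<Sum>p\<in>b. ?R - 1)"
  proof (intro sum.cong refl)
    fix p assume "p \<in> b"
    then have "p \<in> W" using d2_finite_blocks(3)[OF assms bD] by auto
    have "card ({b'\<in>D. p \<in> b'} - {b}) = card {b'\<in>D. p \<in> b'} - 1"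
      using \<open>p \<in> b\<close> bD fD by (subst card_Diff_singleton) auto
    then show "card ({b'\<in>D. p \<in> b'} - {b}) = ?R - 1" using rep[OF \<open>p \<in> W\<close>] by simp
  qed
  also have "\<dots> = k * (?R - 1)" using d2_finite_blocks(4)[OF assms bD] by simp
  finally show "card (nbhd D (one_BIG_adj D) b) = k * (?R - 1)" using eq by simp
qed

lemma d2_alpha:
  assumes "design2 W D n k 1" "I \<subseteq> D" "parallel_class W I"
  shows "alpha_set D (one_BIG_adj D) I"
proof -
  have k0: "k > 0" using assms unfolding design2_def by auto
  have disj: "\<And>J. J \<subseteq> D \<Longrightarrow> independent D (one_BIG_adj D) J \<Longrightarrow> pairwise disjnt J"
    unfolding independent_def pairwise_def disjnt_def d2_adj_iff[OF assms(1)] by blast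
  have cardU: "\<And>J. J \<subseteq> D \<Longrightarrow> pairwise disjnt J \<Longrightarrow> card (\<Union>J) = card J * k"
  proof -
    fix J assume J: "J \<subseteq> D" "pairwise disjnt J"
    have "card (\<Union>J) = sum card J"
      using J d2_finite_blocks(5)[OF assms(1)] by (intro card_Union_disjoint) auto
    also have "\<dots> = sum (\<lambda>_. k) J" using J d2_finite_blocks(4)[OF assms(1)] by (intro sum.cong) auto
    finally show "card (\<Union>J) = card J * k" by simp
  qed
  have indI: "independent D (one_BIG_adj D) I"
    using assms(2,3) unfolding independent_def parallel_class_def d2_adj_iff[OF assms(1)] by blast
  have cI: "card I * k = n"
    using cardU[OF assms(2) disj[OF assms(2) indI]] assms(1,3)
    unfolding parallel_class_def design2_def by auto
  show ?thesis unfolding alpha_set_def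
  proof (intro conjI allI impI indI)
    fix J assume J: "independent D (one_BIG_adj D) J"
    then have JD: "J \<subseteq> D" unfolding independent_def by auto
    have "\<Union>J \<subseteq> W" using JD d2_finite_blocks(3)[OF assms(1)] by auto
    then have "card (\<Union>J) \<le> n" using d2_finite_blocks(1)[OF assms(1)] assms(1) card_mono
      unfolding design2_def by metis
    then have "card J * k \<le> card I * k" using cardU[OF JD disj[OF JD J]] cI by simp
    then show "card J \<le> card I" using k0 by simp
  qed
qed

lemma silver_crit:
  fixes col :: "'v \<Rightarrow> 'c"
  assumes fD: "finite D" and reg: "regular D E r" and al: "alpha_set D E I" and Ine: "I \<noteq> {}"
    and irr: "\<And>x. \<not> E x x"
    and prp: "\<And>x y. x \<in> D \<Longrightarrow> y \<in> D \<Longrightarrow> E x y \<Longrightarrow> col x \<noteq> col y"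
    and inj: "\<And>x. x \<in> I \<Longrightarrow> inj_on col (insert x (nbhd D E x))"
    and img: "\<And>x. x \<in> I \<Longrightarrow> col ` (insert x (nbhd D E x)) = col ` D"
  shows "silver D E"
proof -
  obtain x0 where x0: "x0 \<in> I" using Ine by auto
  have x0D: "x0 \<in> D" using x0 al unfolding alpha_set_def independent_def by auto
  have fN: "finite (nbhd D E x0)" using fD unfolding nbhd_def by auto
  have nx: "x0 \<notin> nbhd D E x0" using irr unfolding nbhd_def by auto
  have "card (col ` D) = card (insert x0 (nbhd D E x0))"
    using img[OF x0] card_image[OF inj[OF x0]] by simp
  also have "\<dots> = r + 1" using fN nx reg x0D unfolding regular_def by simp
  finally have cc: "card (col ` D) = r + 1" .
  obtain h where h: "bij_betw h (col ` D) {0..<card (col ` D)}"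
    using ex_bij_betw_finite_nat fD by blast
  have h': "bij_betw h (col ` D) {0..<r+1}" using h cc by simp
  define c where "c = h \<circ> col"
  have pc: "proper_coloring D E (r+1) c"
    unfolding proper_coloring_def
  proof (intro conjI ballI impI)
    fix x assume "x \<in> D"
    then show "c x < r + 1" using h' unfolding c_def bij_betw_def by auto
  next
    fix x y assume "x \<in> D" "y \<in> D" "E x y"
    then show "c x \<noteq> c y" using prp h' unfolding c_def bij_betw_def inj_on_def by auto
  qed
  have rb: "\<forall>x\<in>I. rainbow D E (r+1) c x"
    unfolding rainbow_def
  proof
    fix x assume "x \<in> I"
    have "c ` insert x (nbhd D E x) = h ` (col ` insert x (nbhd D E x))" unfolding c_def by (simp add: image_comp)
    also have "\<dots> = {0..<r+1}" using img[OF \<open>x \<in> I\<close>] h' unfolding bij_betw_def by simp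
    finally show "c ` insert x (nbhd D E x) = {0..<r+1}" .
  qed
  show ?thesis unfolding silver_def using reg al pc rb by blast
qed


section \<open>Affine planes are resolvable\<close>

locale ag =
  fixes A :: "'a set" and AB :: "'a set set" and k :: nat
  assumes d: "design2 A AB (k^2) k 1"
begin

lemma k2: "k > 2" using d unfolding design2_def by auto

lemma rep: assumes "p \<in> A" shows "card {L\<in>AB. p \<in> L} = k + 1"
proof -
  have e: "card {L\<in>AB. p \<in> L} * (k - 1) = k^2 - 1" using d2_replication[OF d assms] .
  have "(k + 1) * (k - 1) = k^2 - 1" using k2 by (cases k) (auto simp: power2_eq_square)
  moreover have "k - 1 \<noteq> 0" using k2 by simp
  ultimately show ?thesis using e by (metis mult_right_cancel)
qed

definition ln :: "'a \<Rightarrow> 'a \<Rightarrow> 'a set" where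
  "ln p q = (THE M. M \<in> AB \<and> p \<in> M \<and> q \<in> M)"

lemma ln_props: assumes "p \<in> A" "q \<in> A" "p \<noteq> q"
  shows "ln p q \<in> AB" "p \<in> ln p q" "q \<in> ln p q"
    "\<And>M. M \<in> AB \<Longrightarrow> p \<in> M \<Longrightarrow> q \<in> M \<Longrightarrow> M = ln p q"
proof -
  have u: "\<exists>!M. M \<in> AB \<and> p \<in> M \<and> q \<in> M" using d2_unique[OF d assms] .
  show "ln p q \<in> AB" "p \<in> ln p q" "q \<in> ln p q" using theI'[OF u] unfolding ln_def by auto
  show "\<And>M. M \<in> AB \<Longrightarrow> p \<in> M \<Longrightarrow> q \<in> M \<Longrightarrow> M = ln p q"
    using the1_equality[OF u] unfolding ln_def by auto
qed

lemma sub: "L \<in> AB \<Longrightarrow> L \<subseteq> A" using d2_finite_blocks(3)[OF d] .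

lemma playfair:
  assumes L: "L \<in> AB" and p: "p \<in> A" "p \<notin> L"
  shows "\<exists>!M. M \<in> AB \<and> p \<in> M \<and> M \<inter> L = {}"
proof -
  let ?S = "{M\<in>AB. p \<in> M}"
  let ?T = "{M\<in>?S. M \<inter> L \<noteq> {}}"
  have fS: "finite ?S" using d2_finite_blocks(2)[OF d] by auto
  have TS: "?T = ln p ` L"
  proof
    show "?T \<subseteq> ln p ` L"
    proof
      fix M assume M: "M \<in> ?T"
      then obtain q where q: "q \<in> M" "q \<in> L" by auto
      have pq: "p \<noteq> q" using q p by auto
      have qA: "q \<in> A" using q sub[OF L] by auto
      have "M \<in> AB" "p \<in> M" using M by auto
      then have "M = ln p q" using ln_props(4)[OF p(1) qA pq] q by blast
      then show "M \<in> ln p ` L" using q by auto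
    qed
    show "ln p ` L \<subseteq> ?T"
    proof
      fix M assume "M \<in> ln p ` L"
      then obtain q where q: "q \<in> L" "M = ln p q" by auto
      have pq: "p \<noteq> q" using q p by auto
      have qA: "q \<in> A" using q sub[OF L] by auto
      have "M \<in> AB" "p \<in> M" "q \<in> M" using ln_props(1-3)[OF p(1) qA pq] q by auto
      then show "M \<in> ?T" using q by blast
    qed
  qed
  have inj: "inj_on (ln p) L"
  proof (rule inj_onI)
    fix q q' assume q: "q \<in> L" "q' \<in> L" "ln p q = ln p q'"
    show "q = q'"
    proof (rule ccontr)
      assume "q \<noteq> q'"
      have qA: "q \<in> A" "q' \<in> A" and pq: "p \<noteq> q" "p \<noteq> q'" using q p sub[OF L] by auto
      have "ln p q \<in> AB" "q \<in> ln p q" "p \<in> ln p q" using ln_props(1-3)[OF p(1) qA(1) pq(1)] by auto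
      moreover have "q' \<in> ln p q" using ln_props(3)[OF p(1) qA(2) pq(2)] q(3) by simp
      ultimately have "ln p q \<in> AB" "q \<in> ln p q" "q' \<in> ln p q" "p \<in> ln p q" by auto
      then have "ln p q = L" using d2_meet[OF d _ L _ _ q(1) q(2) \<open>q \<noteq> q'\<close>] by auto
      then show False using \<open>p \<in> ln p q\<close> p by auto
    qed
  qed
  have cT: "card ?T = k"
    using TS card_image[OF inj] d2_finite_blocks(4)[OF d L] by simp
  have fT: "finite ?T" using fS by (rule finite_subset[rotated]) auto
  have "card (?S - ?T) = card ?S - card ?T" using fT by (intro card_Diff_subset) auto
  also have "\<dots> = 1" using rep[OF p(1)] cT by simp
  finally have c1: "card (?S - ?T) = 1" .
  have "?S - ?T = {M. M \<in> AB \<and> p \<in> M \<and> M \<inter> L = {}}" by blast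
  then have "card {M. M \<in> AB \<and> p \<in> M \<and> M \<inter> L = {}} = 1" using c1 by simp
  then obtain M0 where eqn: "{M. M \<in> AB \<and> p \<in> M \<and> M \<inter> L = {}} = {M0}" by (erule card_1_singletonE)
  have m0: "M0 \<in> {M. M \<in> AB \<and> p \<in> M \<and> M \<inter> L = {}}" by (simp only: eqn singleton_iff)
  have uq: "M = M0" if "M \<in> {M. M \<in> AB \<and> p \<in> M \<and> M \<inter> L = {}}" for M
  proof -
    have "M \<in> {M0}" using that by (simp only: eqn)
    then show ?thesis by simp
  qed
  show ?thesis
  proof (rule ex1I[of _ M0])
    show "M0 \<in> AB \<and> p \<in> M0 \<and> M0 \<inter> L = {}" using m0 by (simp only: mem_Collect_eq)
    show "\<And>M. M \<in> AB \<and> p \<in> M \<and> M \<inter> L = {} \<Longrightarrow> M = M0" using uq by (simp only: mem_Collect_eq)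
  qed
qed

definition cls :: "'a set \<Rightarrow> 'a set set" where
  "cls L = {M\<in>AB. L = M \<or> L \<inter> M = {}}"

lemma cls_self: "L \<in> AB \<Longrightarrow> L \<in> cls L" unfolding cls_def by auto

lemma cls_sym: "L \<in> AB \<Longrightarrow> M \<in> cls L \<Longrightarrow> L \<in> cls M" unfolding cls_def by auto

lemma cls_trans:
  assumes L: "L \<in> AB" and M: "M \<in> cls L" and N: "N \<in> cls M"
  shows "N \<in> cls L"
proof -
  have MAB: "M \<in> AB" "N \<in> AB" using M N unfolding cls_def by auto
  show ?thesis
  proof (cases "L = M \<or> M = N \<or> L = N")
    case True then show ?thesis using M N L cls_self by auto
  next
    case False
    then have LM: "L \<inter> M = {}" and MN: "M \<inter> N = {}" using M N unfolding cls_def by auto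
    have "L \<inter> N = {}"
    proof (rule ccontr)
      assume "L \<inter> N \<noteq> {}"
      then obtain p where p: "p \<in> L" "p \<in> N" by auto
      have pA: "p \<in> A" using p sub[OF L] by auto
      have "p \<notin> M" using p LM by auto
      then have "L = N" using playfair[OF MAB(1) pA] L MAB p LM MN by blast
      then show False using False by auto
    qed
    then show ?thesis using MAB unfolding cls_def by auto
  qed
qed

lemma cls_eq: assumes "L \<in> AB" "M \<in> cls L" shows "cls M = cls L"
proof -
  have MAB: "M \<in> AB" using assms unfolding cls_def by auto
  show ?thesis
  proof
    show "cls M \<subseteq> cls L" using cls_trans[OF assms(1) assms(2)] by auto
    show "cls L \<subseteq> cls M" using cls_trans[OF MAB cls_sym[OF assms]] by auto
  qed
qed

lemma cls_sub: "cls L \<subseteq> AB" unfolding cls_def by auto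

lemma cls_parallel: assumes L: "L \<in> AB" shows "parallel_class A (cls L)"
  unfolding parallel_class_def
proof
  show "\<Union>(cls L) = A"
  proof
    show "\<Union>(cls L) \<subseteq> A" using sub cls_sub by blast
    show "A \<subseteq> \<Union>(cls L)"
    proof
      fix p assume p: "p \<in> A"
      show "p \<in> \<Union>(cls L)"
      proof (cases "p \<in> L")
        case True then show ?thesis using cls_self[OF L] by auto
      next
        case False
        then obtain M where "M \<in> AB" "p \<in> M" "M \<inter> L = {}" using playfair[OF L p] by auto
        then have "M \<in> cls L" unfolding cls_def by auto
        then show ?thesis using \<open>p \<in> M\<close> by auto
      qed
    qed
  qed
  show "\<forall>b\<in>cls L. \<forall>b'\<in>cls L. b \<noteq> b' \<longrightarrow> b \<inter> b' = {}"
  proof (intro ballI impI)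
    fix b b' assume b: "b \<in> cls L" "b' \<in> cls L" "b \<noteq> b'"
    have "cls b = cls L" using cls_eq[OF L b(1)] .
    then have "b' \<in> cls b" using b by auto
    then show "b \<inter> b' = {}" using b(3) unfolding cls_def by auto
  qed
qed

lemma cls_meet: assumes "g \<in> AB" "L \<in> AB" "L \<notin> cls g" shows "L \<inter> g \<noteq> {}"
  using assms unfolding cls_def by auto

lemma AB_ne: "AB \<noteq> {}"
proof -
  have cA: "card A = k*k" using d unfolding design2_def by (auto simp: power2_eq_square)
  have "2*1 \<le> k*k" using k2 by (intro mult_le_mono) auto
  then have "\<not> card A \<le> Suc 0" using cA by simp
  moreover have "finite A" using d2_finite_blocks(1)[OF d] .
  ultimately obtain p q where "p \<in> A" "q \<in> A" "p \<noteq> q"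
    using card_le_Suc0_iff_eq by blast
  then show ?thesis using ln_props by auto
qed

lemma G_exists:
  "\<exists>G PA. G \<subseteq> AB \<and> parallel_class A G \<and> (\<forall>L\<in>AB. L \<notin> G \<longrightarrow> (\<forall>g\<in>G. L \<inter> g \<noteq> {})) \<and>
     \<Union>PA = AB \<and> (\<forall>\<Pi>\<in>PA. \<Pi> \<noteq> {} \<and> parallel_class A \<Pi>) \<and>
     (\<forall>\<Pi>\<in>PA. \<forall>\<Pi>'\<in>PA. \<Pi> \<noteq> \<Pi>' \<longrightarrow> \<Pi> \<inter> \<Pi>' = {}) \<and> G \<in> PA \<and> card G = k"
proof -
  obtain g0 where g0: "g0 \<in> AB" using AB_ne by auto
  define G where "G = cls g0"
  define PA where "PA = cls ` AB"
  have GAB: "G \<subseteq> AB" unfolding G_def using cls_sub .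
  have Gp: "parallel_class A G" unfolding G_def using cls_parallel[OF g0] .
  have Gm: "\<forall>L\<in>AB. L \<notin> G \<longrightarrow> (\<forall>g\<in>G. L \<inter> g \<noteq> {})"
  proof (intro ballI impI)
    fix L g assume L: "L \<in> AB" "L \<notin> G" and g: "g \<in> G"
    have "g \<in> cls g0" using g G_def by simp
    then have "cls g = cls g0" by (rule cls_eq[OF g0])
    then have cg: "cls g = G" using G_def by simp
    have gAB: "g \<in> AB" using GAB g by auto
    have "L \<notin> cls g" using L cg by simp
    then show "L \<inter> g \<noteq> {}" by (rule cls_meet[OF gAB L(1)])
  qed
  have PU: "\<Union>PA = AB" unfolding PA_def using cls_self cls_sub by blast
  have Pc: "\<forall>\<Pi>\<in>PA. \<Pi> \<noteq> {} \<and> parallel_class A \<Pi>" unfolding PA_def using cls_self cls_parallel by blast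
  have Pd: "\<forall>\<Pi>\<in>PA. \<forall>\<Pi>'\<in>PA. \<Pi> \<noteq> \<Pi>' \<longrightarrow> \<Pi> \<inter> \<Pi>' = {}"
  proof (intro ballI impI)
    fix \<Pi> \<Pi>' assume h: "\<Pi> \<in> PA" "\<Pi>' \<in> PA" "\<Pi> \<noteq> \<Pi>'"
    show "\<Pi> \<inter> \<Pi>' = {}"
    proof (rule ccontr)
      assume "\<Pi> \<inter> \<Pi>' \<noteq> {}"
      then obtain M where M: "M \<in> \<Pi>" "M \<in> \<Pi>'" by auto
      obtain L L' where L: "L \<in> AB" "\<Pi> = cls L" "L' \<in> AB" "\<Pi>' = cls L'" using h unfolding PA_def by auto
      have "cls M = cls L" using cls_eq[OF L(1)] M(1) L(2) by simp
      moreover have "cls M = cls L'" using cls_eq[OF L(3)] M(2) L(4) by simp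
      ultimately show False using h L by simp
    qed
  qed
  have GPA: "G \<in> PA" unfolding G_def PA_def using g0 by auto
  have cG: "card G = k"
  proof -
    have fin: "\<And>g. g \<in> G \<Longrightarrow> finite g" using d2_finite_blocks(5)[OF d] GAB by auto
    have pw: "pairwise disjnt G" using Gp unfolding parallel_class_def pairwise_def disjnt_def by auto
    have "card (\<Union>G) = sum card G" using card_Union_disjoint[OF pw fin] by auto
    also have "\<dots> = sum (\<lambda>_. k) G" using d2_finite_blocks(4)[OF d] GAB by (intro sum.cong) auto
    finally have "card A = card G * k" using Gp unfolding parallel_class_def by simp
    moreover have "card A = k * k" using d unfolding design2_def by (simp add: power2_eq_square)
    ultimately show ?thesis using k2 by simp
  qed
  show ?thesis using GAB Gp Gm PU Pc Pd GPA cG by (intro exI[of _ G] exI[of _ PA] conjI)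
qed

end


section \<open>The product construction\<close>

locale constr =
  fixes A :: "'a set" and AB :: "'a set set" and k :: nat
    and V :: "'b set" and B :: "'b set set" and v :: nat and P :: "'b set set set"
    and G :: "'a set set" and PA :: "'a set set set"
    and W :: "'c set" and F :: "'b \<Rightarrow> 'c set" and Th :: "'b set \<Rightarrow> 'a \<Rightarrow> 'c"
  assumes dA: "design2 A AB (k^2) k 1"
    and dV: "design2 V B v k 1"
    and PU: "\<Union>P = B" and Pc: "\<forall>C\<in>P. C \<noteq> {} \<and> parallel_class V C"
    and Pd: "\<forall>C\<in>P. \<forall>C'\<in>P. C \<noteq> C' \<longrightarrow> C \<inter> C' = {}"
    and GAB: "G \<subseteq> AB" and Gmeet: "\<forall>L\<in>AB. L \<notin> G \<longrightarrow> (\<forall>g\<in>G. L \<inter> g \<noteq> {})"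
    and Gpar: "parallel_class A G"
    and PAU: "\<Union>PA = AB" and PAc: "\<forall>\<Pi>\<in>PA. \<Pi> \<noteq> {} \<and> parallel_class A \<Pi>"
    and PAd: "\<forall>\<Pi>\<in>PA. \<forall>\<Pi>'\<in>PA. \<Pi> \<noteq> \<Pi>' \<longrightarrow> \<Pi> \<inter> \<Pi>' = {}" and GPA: "G \<in> PA"
    and Wfin: "finite W" and Fsub: "\<forall>x\<in>V. F x \<subseteq> W" and Fcard: "\<forall>x\<in>V. card (F x) = k"
    and Fdisj: "\<forall>x\<in>V. \<forall>y\<in>V. x \<noteq> y \<longrightarrow> F x \<inter> F y = {}" and FU: "\<Union>(F ` V) = W"
    and Thbij: "\<forall>b\<in>B. bij_betw (Th b) A (\<Union>x\<in>b. F x)"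
    and Thfib: "\<forall>b\<in>B. \<forall>g\<in>G. \<exists>x\<in>b. Th b ` g = F x"
begin

lemma k2: "k > 2" using dA unfolding design2_def by auto

lemma bV: "b \<in> B \<Longrightarrow> b \<subseteq> V" using d2_finite_blocks(3)[OF dV] .

lemma LA: "L \<in> AB \<Longrightarrow> L \<subseteq> A" using d2_finite_blocks(3)[OF dA] .

lemma Ffin: assumes "x \<in> V" shows "finite (F x)"
proof -
  have "F x \<subseteq> W" using Fsub assms by blast
  then show ?thesis using Wfin by (rule finite_subset)
qed

lemma Fne: assumes "x \<in> V" shows "F x \<noteq> {}"
proof -
  have "card (F x) = k" using Fcard assms by blast
  then show ?thesis using k2 by auto
qed

lemma Funiq: assumes "x \<in> V" "y \<in> V" "w \<in> F x" "w \<in> F y" shows "x = y"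
proof (rule ccontr)
  assume "x \<noteq> y"
  then have "F x \<inter> F y = {}" using Fdisj assms(1,2) by blast
  then show False using assms(3,4) by blast
qed

lemma Thbij1: assumes "b \<in> B" shows "bij_betw (Th b) A (\<Union>x\<in>b. F x)"
  using Thbij assms by (rule bspec)

lemma Thinj: "b \<in> B \<Longrightarrow> inj_on (Th b) A" by (rule bij_betw_imp_inj_on[OF Thbij1])

lemma Thimg: "b \<in> B \<Longrightarrow> Th b ` A = (\<Union>x\<in>b. F x)" by (rule bij_betw_imp_surj_on[OF Thbij1])

lemma fib_line:
  assumes b: "b \<in> B" and x: "x \<in> b"
  shows "\<exists>g\<in>G. Th b ` g = F x"
proof -
  have xV: "x \<in> V" using bV[OF b] x by blast
  obtain w where w: "w \<in> F x" using Fne[OF xV] by blast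
  then have "w \<in> (\<Union>x\<in>b. F x)" using x by blast
  then have "w \<in> Th b ` A" using Thimg[OF b] by simp
  then obtain a where a: "a \<in> A" "w = Th b a" by blast
  have "\<Union>G = A" using Gpar unfolding parallel_class_def by simp
  then obtain g where g: "g \<in> G" "a \<in> g" using a(1) by blast
  have "\<exists>z\<in>b. Th b ` g = F z" using bspec[OF bspec[OF Thfib b] g(1)] .
  then obtain z where z: "z \<in> b" "Th b ` g = F z" by blast
  have "w \<in> Th b ` g" using a g by simp
  then have "w \<in> F z" using z(2) by simp
  moreover have "z \<in> V" using bV[OF b] z(1) by blast
  ultimately have "z = x" using Funiq[OF _ xV _ w] by blast
  then show ?thesis using g z by blast
qed

lemma K1:
  assumes b: "b \<in> B" and L: "L \<in> AB" "L \<notin> G" and x: "x \<in> b"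
  shows "card (Th b ` L \<inter> F x) = 1"
proof -
  obtain g where g: "g \<in> G" "Th b ` g = F x" using fib_line[OF b x] by auto
  have gAB: "g \<in> AB" using g GAB by auto
  have "Th b ` L \<inter> F x = Th b ` (L \<inter> g)"
    using inj_on_image_Int[OF Thinj[OF b] LA[OF L(1)] LA[OF gAB]] g by simp
  moreover have "card (Th b ` (L \<inter> g)) = card (L \<inter> g)"
    using Thinj[OF b] LA[OF L(1)] by (intro card_image) (auto intro: inj_on_subset)
  moreover have "L \<noteq> g" using L g by auto
  then have "card (L \<inter> g) \<le> 1" using d2_inter_le1[OF dA L(1) gAB] by simp
  moreover have "L \<inter> g \<noteq> {}" using Gmeet L g by auto
  moreover have "finite (L \<inter> g)" using d2_finite_blocks(5)[OF dA L(1)] by auto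
  ultimately show ?thesis by (metis card_0_eq le_antisym less_one not_le)
qed

lemma Thsub: assumes b: "b \<in> B" and L: "L \<in> AB" shows "Th b ` L \<subseteq> (\<Union>x\<in>b. F x)"
proof -
  have "Th b ` L \<subseteq> Th b ` A" using LA[OF L] by (rule image_mono)
  then show ?thesis using Thimg[OF b] by simp
qed

lemma K1':
  assumes b: "b \<in> B" and L: "L \<in> AB" and x: "x \<in> V" "x \<notin> b"
  shows "Th b ` L \<inter> F x = {}"
proof (rule equals0I)
  fix w assume w: "w \<in> Th b ` L \<inter> F x"
  then have "w \<in> (\<Union>y\<in>b. F y)" using Thsub[OF b L] by blast
  then obtain y where y: "y \<in> b" "w \<in> F y" by blast
  have "y \<in> V" using y(1) bV[OF b] by blast
  then have "y = x" using Funiq[OF _ x(1) y(2)] w by blast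
  then show False using y(1) x(2) by simp
qed

lemma K2: assumes b: "b \<in> B" and L: "L \<in> AB" shows "Th b ` L \<subseteq> W"
proof
  fix w assume "w \<in> Th b ` L"
  then have "w \<in> (\<Union>y\<in>b. F y)" using Thsub[OF b L] by blast
  then obtain y where y: "y \<in> b" "w \<in> F y" by blast
  have "y \<in> V" using y(1) bV[OF b] by blast
  then show "w \<in> W" using Fsub y(2) by blast
qed

lemma K2c: assumes b: "b \<in> B" and L: "L \<in> AB" shows "card (Th b ` L) = k"
proof -
  have "inj_on (Th b) L" using inj_on_subset[OF Thinj[OF b] LA[OF L]] .
  then have "card (Th b ` L) = card L" by (rule card_image)
  then show ?thesis using d2_finite_blocks(4)[OF dA L] by simp
qed

lemma blk:
  assumes b: "b \<in> B" and L: "L \<in> AB" "L \<notin> G"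
  shows "{x\<in>V. Th b ` L \<inter> F x \<noteq> {}} = b"
proof
  show "{x\<in>V. Th b ` L \<inter> F x \<noteq> {}} \<subseteq> b" using K1'[OF b L(1)] by blast
  show "b \<subseteq> {x\<in>V. Th b ` L \<inter> F x \<noteq> {}}"
  proof
    fix x assume x: "x \<in> b"
    have "card (Th b ` L \<inter> F x) = 1" using K1[OF b L x] .
    then have "Th b ` L \<inter> F x \<noteq> {}" by auto
    then show "x \<in> {x\<in>V. Th b ` L \<inter> F x \<noteq> {}}" using x bV[OF b] by auto
  qed
qed

lemma NF_inj:
  assumes b: "b \<in> B" and L: "L \<in> AB" "L \<notin> G" and b': "b' \<in> B" and L': "L' \<in> AB" "L' \<notin> G"
    and e: "Th b ` L = Th b' ` L'"
  shows "b = b' \<and> L = L'"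
proof -
  have bb: "b = b'" using blk[OF b L] blk[OF b' L'] e by simp
  have "L = L'" using inj_on_image_eq_iff[OF Thinj[OF b] LA[OF L(1)] LA[OF L'(1)]] e bb by simp
  then show ?thesis using bb by simp
qed

lemma NF_not_F:
  assumes b: "b \<in> B" and L: "L \<in> AB" "L \<notin> G" and x: "x \<in> V"
  shows "Th b ` L \<noteq> F x"
proof
  assume e: "Th b ` L = F x"
  show False
  proof (cases "x \<in> b")
    case True
    then have "card (F x \<inter> F x) = 1" using K1[OF b L] e by metis
    then show False using Fcard x k2 by simp
  next
    case False
    then have "F x \<inter> F x = {}" using K1'[OF b L(1) x] e by simp
    then show False using Fne[OF x] by simp
  qed
qed

definition NF where "NF = {Th b ` L | b L. b \<in> B \<and> L \<in> AB \<and> L \<notin> G}"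
definition FB where "FB = F ` V"
definition Dst where "Dst = NF \<union> FB"

lemma NF_FB: "NF \<inter> FB = {}"
  unfolding NF_def FB_def using NF_not_F by blast

lemma cardW: "card W = k * v"
proof -
  have "card W = card (\<Union>x\<in>V. F x)" using FU by simp
  also have "\<dots> = (\<Sum>x\<in>V. card (F x))"
    using d2_finite_blocks(1)[OF dV] Ffin Fdisj by (intro card_UN_disjoint) auto
  also have "\<dots> = (\<Sum>x\<in>V. k)" using Fcard by simp
  also have "\<dots> = k * v" using dV unfolding design2_def by simp
  finally show ?thesis .
qed

lemma NF_mem: "\<beta> \<in> NF \<Longrightarrow> \<exists>b L. b \<in> B \<and> L \<in> AB \<and> L \<notin> G \<and> \<beta> = Th b ` L"
  unfolding NF_def by blast

lemma NF_I: "b \<in> B \<Longrightarrow> L \<in> AB \<Longrightarrow> L \<notin> G \<Longrightarrow> Th b ` L \<in> NF"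
  unfolding NF_def by blast

lemma Dst_cases:
  assumes "\<beta> \<in> Dst"
  obtains (nf) b L where "b \<in> B" "L \<in> AB" "L \<notin> G" "\<beta> = Th b ` L" "\<beta> \<notin> FB"
  | (fb) x where "x \<in> V" "\<beta> = F x"
proof (cases "\<beta> \<in> FB")
  case True then show ?thesis using fb unfolding FB_def by blast
next
  case False
  then have "\<beta> \<in> NF" using assms unfolding Dst_def by blast
  then show ?thesis using nf NF_mem False by blast
qed

lemma pt_fib: assumes "w \<in> W" obtains x where "x \<in> V" "w \<in> F x"
  using assms FU by blast

lemma two_in_fib:
  assumes b: "b \<in> B" and L: "L \<in> AB" "L \<notin> G" and x: "x \<in> b"
    and p: "p \<in> Th b ` L" "p \<in> F x" and q: "q \<in> Th b ` L" "q \<in> F x"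
  shows "p = q"
proof -
  have c: "card (Th b ` L \<inter> F x) = 1" using K1[OF b L x] .
  have "finite (Th b ` L \<inter> F x)" using c by (intro card_ge_0_finite) simp
  then have "\<forall>a1\<in>Th b ` L \<inter> F x. \<forall>a2\<in>Th b ` L \<inter> F x. a1 = a2"
    using c card_le_Suc0_iff_eq by (metis le_refl One_nat_def)
  then show ?thesis using p q by blast
qed

lemma in_NF_fib:
  assumes b: "b \<in> B" and L: "L \<in> AB" and x: "x \<in> V" and p: "p \<in> Th b ` L" "p \<in> F x"
  shows "x \<in> b"
proof (rule ccontr)
  assume "x \<notin> b"
  then have "Th b ` L \<inter> F x = {}" using K1'[OF b L x] by simp
  then show False using p by blast
qed

lemma pair:
  assumes p: "p \<in> W" and q: "q \<in> W" and pq: "p \<noteq> q"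
  shows "\<exists>\<beta>0. {\<beta>\<in>Dst. p \<in> \<beta> \<and> q \<in> \<beta>} = {\<beta>0}"
proof -
  obtain x where x: "x \<in> V" "p \<in> F x" using pt_fib[OF p] by blast
  obtain y where y: "y \<in> V" "q \<in> F y" using pt_fib[OF q] by blast
  show ?thesis
  proof (cases "x = y")
    case True
    have "{\<beta>\<in>Dst. p \<in> \<beta> \<and> q \<in> \<beta>} = {F x}"
    proof (intro equalityI subsetI)
      fix \<beta> assume h: "\<beta> \<in> {\<beta>\<in>Dst. p \<in> \<beta> \<and> q \<in> \<beta>}"
      then have hD: "\<beta> \<in> Dst" and hp: "p \<in> \<beta>" and hq: "q \<in> \<beta>" by auto
      show "\<beta> \<in> {F x}"
        using hD proof (cases rule: Dst_cases)
        case (nf b L)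
        have xb: "x \<in> b" using in_NF_fib[OF nf(1,2) x(1)] hp nf(4) x(2) by blast
        have "p = q" using two_in_fib[OF nf(1,2,3) xb] hp hq nf(4) x(2) y(2) True by blast
        then show ?thesis using pq by simp
      next
        case (fb z)
        then have "z = x" using Funiq[OF fb(1) x(1)] hp x(2) by blast
        then show ?thesis using fb by simp
      qed
    next
      fix \<beta> assume "\<beta> \<in> {F x}"
      then show "\<beta> \<in> {\<beta>\<in>Dst. p \<in> \<beta> \<and> q \<in> \<beta>}"
        using x y True unfolding Dst_def FB_def by blast
    qed
    then show ?thesis by blast
  next
    case False
    obtain b0 where b0: "b0 \<in> B" "x \<in> b0" "y \<in> b0" using d2_unique[OF dV x(1) y(1) False] by blast
    have "p \<in> (\<Union>z\<in>b0. F z)" using b0(2) x(2) by blast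
    then have "p \<in> Th b0 ` A" using Thimg[OF b0(1)] by simp
    then obtain a where a: "a \<in> A" "p = Th b0 a" by blast
    have "q \<in> (\<Union>z\<in>b0. F z)" using b0(3) y(2) by blast
    then have "q \<in> Th b0 ` A" using Thimg[OF b0(1)] by simp
    then obtain a' where a': "a' \<in> A" "q = Th b0 a'" by blast
    have aa: "a \<noteq> a'" using a a' pq by blast
    obtain L0 where L0: "L0 \<in> AB" "a \<in> L0" "a' \<in> L0" using d2_unique[OF dA a(1) a'(1) aa] by blast
    have L0G: "L0 \<notin> G"
    proof
      assume "L0 \<in> G"
      then have "\<exists>z\<in>b0. Th b0 ` L0 = F z" using bspec[OF bspec[OF Thfib b0(1)]] by blast
      then obtain z where z: "z \<in> b0" "Th b0 ` L0 = F z" by blast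
      have zV: "z \<in> V" using z(1) bV[OF b0(1)] by blast
      have "p \<in> F z" "q \<in> F z" using a a' L0 z(2) by (blast, blast)
      then have "z = x" "z = y" using Funiq[OF zV x(1) _ x(2)] Funiq[OF zV y(1) _ y(2)] by blast+
      then show False using False by simp
    qed
    have "{\<beta>\<in>Dst. p \<in> \<beta> \<and> q \<in> \<beta>} = {Th b0 ` L0}"
    proof (intro equalityI subsetI)
      fix \<beta> assume h: "\<beta> \<in> {\<beta>\<in>Dst. p \<in> \<beta> \<and> q \<in> \<beta>}"
      then have hD: "\<beta> \<in> Dst" and hp: "p \<in> \<beta>" and hq: "q \<in> \<beta>" by auto
      show "\<beta> \<in> {Th b0 ` L0}"
        using hD proof (cases rule: Dst_cases)
        case (nf b L)
        have xb: "x \<in> b" using in_NF_fib[OF nf(1,2) x(1)] hp nf(4) x(2) by blast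
        have yb: "y \<in> b" using in_NF_fib[OF nf(1,2) y(1)] hq nf(4) y(2) by blast
        have bb: "b = b0" using d2_meet[OF dV nf(1) b0(1) xb yb b0(2,3) False] .
        have LA': "L \<subseteq> A" using LA[OF nf(2)] .
        have "Th b0 a \<in> Th b0 ` L" using hp a(2) nf(4) bb by simp
        then obtain a1 where a1: "a1 \<in> L" "Th b0 a = Th b0 a1" by blast
        have "a = a1" using inj_onD[OF Thinj[OF b0(1)] a1(2) a(1)] a1(1) LA' by blast
        then have aL: "a \<in> L" using a1 by simp
        have "Th b0 a' \<in> Th b0 ` L" using hq a'(2) nf(4) bb by simp
        then obtain a2 where a2: "a2 \<in> L" "Th b0 a' = Th b0 a2" by blast
        have "a' = a2" using inj_onD[OF Thinj[OF b0(1)] a2(2) a'(1)] a2(1) LA' by blast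
        then have aL': "a' \<in> L" using a2 by simp
        have "L = L0" using d2_meet[OF dA nf(2) L0(1) aL aL' L0(2,3) aa] .
        then show ?thesis using nf(4) bb by simp
      next
        case (fb z)
        then have "z = x" "z = y" using Funiq[OF fb(1) x(1) _ x(2)] Funiq[OF fb(1) y(1) _ y(2)] hp hq
          by blast+
        then show ?thesis using False by simp
      qed
    next
      fix \<beta> assume "\<beta> \<in> {Th b0 ` L0}"
      then have e: "\<beta> = Th b0 ` L0" by simp
      have "\<beta> \<in> Dst" using NF_I[OF b0(1) L0(1) L0G] e unfolding Dst_def by blast
      moreover have "p \<in> \<beta>" "q \<in> \<beta>" using e a a' L0 by blast+
      ultimately show "\<beta> \<in> {\<beta>\<in>Dst. p \<in> \<beta> \<and> q \<in> \<beta>}" by blast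
    qed
    then show ?thesis by blast
  qed
qed

lemma v_gt: "v > k" using dV unfolding design2_def by auto

theorem design_Dst: "design2 W Dst (k * v) k 1"
proof -
  have blocks: "\<forall>\<beta>\<in>Dst. \<beta> \<subseteq> W \<and> card \<beta> = k"
  proof
    fix \<beta> assume "\<beta> \<in> Dst"
    then show "\<beta> \<subseteq> W \<and> card \<beta> = k"
    proof (cases rule: Dst_cases)
      case (nf b L) then show ?thesis using K2[OF nf(1,2)] K2c[OF nf(1,2)] by simp
    next
      case (fb x) then show ?thesis using Fsub Fcard by simp
    qed
  qed
  have pairs: "\<forall>p\<in>W. \<forall>q\<in>W. p \<noteq> q \<longrightarrow> card {\<beta>\<in>Dst. p \<in> \<beta> \<and> q \<in> \<beta>} = 1"
  proof (intro ballI impI)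
    fix p q assume "p \<in> W" "q \<in> W" "p \<noteq> q"
    then obtain \<beta>0 where "{\<beta>\<in>Dst. p \<in> \<beta> \<and> q \<in> \<beta>} = {\<beta>0}" using pair by blast
    then show "card {\<beta>\<in>Dst. p \<in> \<beta> \<and> q \<in> \<beta>} = 1" by simp
  qed
  have "k < k * v" using v_gt k2 by simp
  then show ?thesis unfolding design2_def using Wfin cardW k2 blocks pairs by blast
qed

lemma CB: "C \<in> P \<Longrightarrow> C \<subseteq> B" using PU by blast

lemma C_par: "C \<in> P \<Longrightarrow> parallel_class V C" using Pc by blast

lemma C_cover: assumes "C \<in> P" "x \<in> V" shows "\<exists>b\<in>C. x \<in> b"
proof -
  have "\<Union>C = V" using C_par[OF assms(1)] unfolding parallel_class_def by simp
  then show ?thesis using assms(2) by blast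
qed

lemma C_disj: assumes "C \<in> P" "b \<in> C" "b' \<in> C" "b \<noteq> b'" shows "b \<inter> b' = {}"
  using C_par[OF assms(1)] assms(2-4) unfolding parallel_class_def by blast

lemma PiL: assumes "\<Pi> \<in> PA" "\<Pi> \<noteq> G" "L \<in> \<Pi>" shows "L \<in> AB" "L \<notin> G"
proof -
  show "L \<in> AB" using PAU assms by blast
  have "\<Pi> \<inter> G = {}" using PAd assms(1,2) GPA by blast
  then show "L \<notin> G" using assms(3) by blast
qed

lemma Pi_par: "\<Pi> \<in> PA \<Longrightarrow> parallel_class A \<Pi>" using PAc by blast

lemma blocks_disj:
  assumes b: "b \<in> B" "b' \<in> B" and bb: "b \<inter> b' = {}" and L: "L \<in> AB" "L' \<in> AB"
  shows "Th b ` L \<inter> Th b' ` L' = {}"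
proof (rule equals0I)
  fix w assume w: "w \<in> Th b ` L \<inter> Th b' ` L'"
  then have "w \<in> (\<Union>z\<in>b. F z)" using Thsub[OF b(1) L(1)] by blast
  then obtain z where z: "z \<in> b" "w \<in> F z" by blast
  have "w \<in> (\<Union>z\<in>b'. F z)" using w Thsub[OF b(2) L(2)] by blast
  then obtain z' where z': "z' \<in> b'" "w \<in> F z'" by blast
  have "z \<in> V" "z' \<in> V" using z z' bV b by blast+
  then have "z = z'" using Funiq z(2) z'(2) by blast
  then show False using z(1) z'(1) bb by blast
qed

definition cl where "cl C \<Pi> = {Th b ` L | b L. b \<in> C \<and> L \<in> \<Pi>}"

definition Pst where "Pst = {cl C \<Pi> | C \<Pi>. C \<in> P \<and> \<Pi> \<in> PA \<and> \<Pi> \<noteq> G} \<union> {FB}"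

lemma FB_par: "parallel_class W FB"
  unfolding parallel_class_def FB_def
proof (intro conjI ballI impI)
  show "\<Union>(F ` V) = W" using FU .
  fix b b' assume h: "b \<in> F ` V" "b' \<in> F ` V" "b \<noteq> b'"
  then obtain x y where xy: "x \<in> V" "y \<in> V" "b = F x" "b' = F y" by blast
  then have "x \<noteq> y" using h(3) by blast
  then have "F x \<inter> F y = {}" using Fdisj xy(1,2) by blast
  then show "b \<inter> b' = {}" using xy(3,4) by simp
qed

lemma cl_sub: assumes "C \<in> P" "\<Pi> \<in> PA" "\<Pi> \<noteq> G" shows "cl C \<Pi> \<subseteq> NF"
proof
  fix \<beta> assume "\<beta> \<in> cl C \<Pi>"
  then obtain b L where bL: "b \<in> C" "L \<in> \<Pi>" "\<beta> = Th b ` L" unfolding cl_def by blast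
  have "b \<in> B" using CB[OF assms(1)] bL(1) by blast
  then show "\<beta> \<in> NF" using NF_I PiL[OF assms(2,3) bL(2)] bL(3) by blast
qed

lemma cl_par: assumes C: "C \<in> P" and Pi: "\<Pi> \<in> PA" "\<Pi> \<noteq> G" shows "parallel_class W (cl C \<Pi>)"
  unfolding parallel_class_def
proof (intro conjI ballI impI)
  show "\<Union>(cl C \<Pi>) = W"
  proof (intro equalityI subsetI)
    fix w assume "w \<in> \<Union>(cl C \<Pi>)"
    then obtain b L where bL: "b \<in> C" "L \<in> \<Pi>" "w \<in> Th b ` L" unfolding cl_def by blast
    have "b \<in> B" using CB[OF C] bL(1) by blast
    then show "w \<in> W" using K2 PiL[OF Pi bL(2)] bL(3) by blast
  next
    fix w assume w: "w \<in> W"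
    obtain x where x: "x \<in> V" "w \<in> F x" using pt_fib[OF w] by blast
    obtain b where b: "b \<in> C" "x \<in> b" using C_cover[OF C x(1)] by blast
    have bB: "b \<in> B" using CB[OF C] b(1) by blast
    have "w \<in> (\<Union>z\<in>b. F z)" using b(2) x(2) by blast
    then have "w \<in> Th b ` A" using Thimg[OF bB] by simp
    then obtain a where a: "a \<in> A" "w = Th b a" by blast
    have "\<Union>\<Pi> = A" using Pi_par[OF Pi(1)] unfolding parallel_class_def by simp
    then obtain L where L: "L \<in> \<Pi>" "a \<in> L" using a(1) by blast
    have "Th b ` L \<in> cl C \<Pi>" unfolding cl_def using b(1) L(1) by blast
    moreover have "w \<in> Th b ` L" using a L by simp
    ultimately show "w \<in> \<Union>(cl C \<Pi>)" by blast
  qed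
next
  fix \<beta> \<beta>' assume h: "\<beta> \<in> cl C \<Pi>" "\<beta>' \<in> cl C \<Pi>" "\<beta> \<noteq> \<beta>'"
  obtain b L where bL: "b \<in> C" "L \<in> \<Pi>" "\<beta> = Th b ` L" using h(1) unfolding cl_def by blast
  obtain b' L' where bL': "b' \<in> C" "L' \<in> \<Pi>" "\<beta>' = Th b' ` L'" using h(2) unfolding cl_def by blast
  have bB: "b \<in> B" "b' \<in> B" using CB[OF C] bL(1) bL'(1) by blast+
  have LAB: "L \<in> AB" "L' \<in> AB" using PiL[OF Pi] bL(2) bL'(2) by blast+
  show "\<beta> \<inter> \<beta>' = {}"
  proof (cases "b = b'")
    case True
    then have "L \<noteq> L'" using h(3) bL(3) bL'(3) by blast
    then have "L \<inter> L' = {}" using Pi_par[OF Pi(1)] bL(2) bL'(2) unfolding parallel_class_def by blast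
    then have "Th b ` (L \<inter> L') = {}" by simp
    moreover have "Th b ` (L \<inter> L') = Th b ` L \<inter> Th b ` L'"
      using inj_on_image_Int[OF Thinj[OF bB(1)] LA[OF LAB(1)] LA[OF LAB(2)]] .
    ultimately show ?thesis using bL(3) bL'(3) True by simp
  next
    case False
    then have "b \<inter> b' = {}" using C_disj[OF C bL(1) bL'(1)] by blast
    then show ?thesis using blocks_disj[OF bB _ LAB] bL(3) bL'(3) by simp
  qed
qed

theorem resolvable_Dst: "resolvable W Dst"
  unfolding resolvable_def
proof (intro exI[of _ Pst] conjI ballI impI)
  show "\<Union>Pst = Dst"
  proof (intro equalityI subsetI)
    fix \<beta> assume "\<beta> \<in> \<Union>Pst"
    then obtain X where X: "X \<in> Pst" "\<beta> \<in> X" by blast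
    show "\<beta> \<in> Dst"
    proof (cases "X = FB")
      case True then show ?thesis using X unfolding Dst_def by blast
    next
      case False
      then obtain C \<Pi> where "C \<in> P" "\<Pi> \<in> PA" "\<Pi> \<noteq> G" "X = cl C \<Pi>" using X(1) unfolding Pst_def by blast
      then show ?thesis using cl_sub X(2) unfolding Dst_def by blast
    qed
  next
    fix \<beta> assume "\<beta> \<in> Dst"
    then show "\<beta> \<in> \<Union>Pst"
    proof (cases rule: Dst_cases)
      case (nf b L)
      obtain C where C: "C \<in> P" "b \<in> C" using PU nf(1) by blast
      obtain \<Pi> where Pi: "\<Pi> \<in> PA" "L \<in> \<Pi>" using PAU nf(2) by blast
      have "\<Pi> \<noteq> G" using Pi(2) nf(3) by blast
      then have "cl C \<Pi> \<in> Pst" unfolding Pst_def using C Pi by blast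
      moreover have "\<beta> \<in> cl C \<Pi>" unfolding cl_def using C(2) Pi(2) nf(4) by blast
      ultimately show ?thesis by blast
    next
      case (fb x) then show ?thesis unfolding Pst_def FB_def by blast
    qed
  qed
next
  fix X assume X: "X \<in> Pst"
  show "X \<noteq> {}"
  proof (cases "X = FB")
    case True
    have "V \<noteq> {}" using v_gt dV unfolding design2_def by auto
    then show ?thesis using True unfolding FB_def by blast
  next
    case False
    then obtain C \<Pi> where h: "C \<in> P" "\<Pi> \<in> PA" "\<Pi> \<noteq> G" "X = cl C \<Pi>" using X unfolding Pst_def by blast
    obtain b where "b \<in> C" using Pc h(1) by blast
    moreover obtain L where "L \<in> \<Pi>" using PAc h(2) by blast
    ultimately have "Th b ` L \<in> cl C \<Pi>" unfolding cl_def by blast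
    then show ?thesis using h(4) by blast
  qed
  show "parallel_class W X"
  proof (cases "X = FB")
    case True then show ?thesis using FB_par by simp
  next
    case False
    then obtain C \<Pi> where h: "C \<in> P" "\<Pi> \<in> PA" "\<Pi> \<noteq> G" "X = cl C \<Pi>" using X unfolding Pst_def by blast
    then show ?thesis using cl_par by simp
  qed
next
  fix X X' assume X: "X \<in> Pst" "X' \<in> Pst" "X \<noteq> X'"
  have clFB: "cl C \<Pi> \<inter> FB = {}" if "C \<in> P" "\<Pi> \<in> PA" "\<Pi> \<noteq> G" for C \<Pi>
    using cl_sub[OF that] NF_FB by blast
  show "X \<inter> X' = {}"
  proof (cases "X = FB")
    case True
    then have "X' \<noteq> FB" using X by simp
    then obtain C \<Pi> where h: "C \<in> P" "\<Pi> \<in> PA" "\<Pi> \<noteq> G" "X' = cl C \<Pi>" using X(2) unfolding Pst_def by blast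
    then show ?thesis using clFB[OF h(1-3)] True by blast
  next
    case False
    then obtain C \<Pi> where h: "C \<in> P" "\<Pi> \<in> PA" "\<Pi> \<noteq> G" "X = cl C \<Pi>" using X(1) unfolding Pst_def by blast
    show ?thesis
    proof (cases "X' = FB")
      case True then show ?thesis using clFB[OF h(1-3)] h(4) by blast
    next
      case False
      then obtain C' \<Pi>' where h': "C' \<in> P" "\<Pi>' \<in> PA" "\<Pi>' \<noteq> G" "X' = cl C' \<Pi>'"
        using X(2) unfolding Pst_def by blast
      show ?thesis
      proof (rule equals0I)
        fix \<beta> assume "\<beta> \<in> X \<inter> X'"
        then have \<beta>: "\<beta> \<in> cl C \<Pi>" "\<beta> \<in> cl C' \<Pi>'" using h(4) h'(4) by blast+
        obtain b L where bL: "b \<in> C" "L \<in> \<Pi>" "\<beta> = Th b ` L" using \<beta>(1) unfolding cl_def by blast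
        obtain b' L' where bL': "b' \<in> C'" "L' \<in> \<Pi>'" "\<beta> = Th b' ` L'" using \<beta>(2) unfolding cl_def by blast
        have bB: "b \<in> B" "b' \<in> B" using CB h(1) h'(1) bL(1) bL'(1) by blast+
        have e: "b = b' \<and> L = L'"
          using NF_inj[OF bB(1) PiL[OF h(2,3) bL(2)] bB(2) PiL[OF h'(2,3) bL'(2)]] bL(3) bL'(3) by simp
        have "C = C'" using Pd h(1) h'(1) bL(1) bL'(1) e by blast
        moreover have "\<Pi> = \<Pi>'" using PAd h(2) h'(2) bL(2) bL'(2) e by blast
        ultimately show False using X(3) h(4) h'(4) by simp
      qed
    qed
  qed
qed

subsection \<open>Silver coloring\<close>

definition blkf where "blkf \<beta> = {x\<in>V. \<beta> \<inter> F x \<noteq> {}}"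
definition clsD where "clsD b = (THE C. C \<in> P \<and> b \<in> C)"

lemma clsD_uniq: assumes "C \<in> P" "b \<in> C" shows "clsD b = C"
  unfolding clsD_def
proof (rule the_equality)
  show "C \<in> P \<and> b \<in> C" using assms by simp
  fix C' assume "C' \<in> P \<and> b \<in> C'"
  then show "C' = C" using Pd assms by blast
qed

lemma clsD: assumes "b \<in> B" shows "clsD b \<in> P" "b \<in> clsD b"
proof -
  obtain C where "C \<in> P" "b \<in> C" using PU assms by blast
  then show "clsD b \<in> P" "b \<in> clsD b" using clsD_uniq by simp_all
qed

definition c0 where
  "c0 \<beta> = (if \<beta> \<in> FB then None else Some (clsD (blkf \<beta>), inv_into A (Th (blkf \<beta>)) ` \<beta>))"

lemma c0_NF: assumes b: "b \<in> B" and L: "L \<in> AB" "L \<notin> G"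
  shows "c0 (Th b ` L) = Some (clsD b, L)"
proof -
  have nf: "Th b ` L \<notin> FB" using NF_I[OF b L] NF_FB by blast
  have bl: "blkf (Th b ` L) = b" unfolding blkf_def using blk[OF b L] .
  have "inv_into A (Th b) ` Th b ` L = L" using inv_into_image_cancel[OF Thinj[OF b] LA[OF L(1)]] .
  then show ?thesis unfolding c0_def using nf bl by simp
qed

lemma c0_FB: "\<beta> \<in> FB \<Longrightarrow> c0 \<beta> = None" unfolding c0_def by simp

lemma adj_iff: "one_BIG_adj Dst \<beta> \<beta>' \<longleftrightarrow> \<beta> \<in> Dst \<and> \<beta>' \<in> Dst \<and> \<beta> \<noteq> \<beta>' \<and> \<beta> \<inter> \<beta>' \<noteq> {}"
  using d2_adj_iff[OF design_Dst] .

lemma nb_NF: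
  assumes x: "x \<in> V" and \<beta>: "\<beta> \<in> nbhd Dst (one_BIG_adj Dst) (F x)"
  obtains b L where "b \<in> B" "L \<in> AB" "L \<notin> G" "\<beta> = Th b ` L" "x \<in> b"
proof -
  have h: "\<beta> \<in> Dst" "F x \<noteq> \<beta>" "F x \<inter> \<beta> \<noteq> {}" using \<beta> unfolding nbhd_def adj_iff by blast+
  show ?thesis using h(1)
  proof (cases rule: Dst_cases)
    case (nf b L)
    have "x \<in> b"
    proof (rule ccontr)
      assume "x \<notin> b"
      then have "Th b ` L \<inter> F x = {}" using K1'[OF nf(1,2) x] by simp
      then show False using h(3) nf(4) by blast
    qed
    then show ?thesis using that nf by blast
  next
    case (fb y)
    have "x \<noteq> y" using h(2) fb(2) by blast
    then have "F x \<inter> F y = {}" using Fdisj x fb(1) by blast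
    then show ?thesis using h(3) fb(2) by simp
  qed
qed

theorem silver_Dst: "silver Dst (one_BIG_adj Dst)"
proof (rule silver_crit[where col = c0 and I = FB])
  show "finite Dst" using d2_finite_blocks(2)[OF design_Dst] .
  show "regular Dst (one_BIG_adj Dst) (k * ((k * v - 1) div (k - 1) - 1))" using d2_regular[OF design_Dst] .
  have FBD: "FB \<subseteq> Dst" unfolding Dst_def by blast
  show "alpha_set Dst (one_BIG_adj Dst) FB" using d2_alpha[OF design_Dst FBD FB_par] .
  have "V \<noteq> {}" using v_gt dV unfolding design2_def by auto
  then show "FB \<noteq> {}" unfolding FB_def by blast
  show "\<And>x. \<not> one_BIG_adj Dst x x" unfolding one_BIG_adj_def by blast
next
  fix \<beta> \<beta>' assume h: "\<beta> \<in> Dst" "\<beta>' \<in> Dst" "one_BIG_adj Dst \<beta> \<beta>'"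
  then have ne: "\<beta> \<noteq> \<beta>'" and mt: "\<beta> \<inter> \<beta>' \<noteq> {}" unfolding adj_iff by blast+
  show "c0 \<beta> \<noteq> c0 \<beta>'"
    using h(1)
  proof (cases rule: Dst_cases)
    case (nf b L)
    show ?thesis using h(2)
    proof (cases rule: Dst_cases)
      case nf': (nf b' L')
      show ?thesis
      proof
        assume "c0 \<beta> = c0 \<beta>'"
        then have e: "clsD b = clsD b'" "L = L'" using c0_NF[OF nf(1-3)] c0_NF[OF nf'(1-3)] nf(4) nf'(4) by simp_all
        show False
        proof (cases "b = b'")
          case True then show False using ne nf(4) nf'(4) e(2) by simp
        next
          case False
          have "b' \<in> clsD b" using clsD(2)[OF nf'(1)] e(1) by simp
          then have "b \<inter> b' = {}" using C_disj[OF clsD(1)[OF nf(1)] clsD(2)[OF nf(1)]] False by blast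
          then have "\<beta> \<inter> \<beta>' = {}" using blocks_disj[OF nf(1) nf'(1) _ nf(2) nf'(2)] nf(4) nf'(4) by simp
          then show False using mt by simp
        qed
      qed
    next
      case (fb y)
      then have "\<beta>' \<in> FB" unfolding FB_def by blast
      then show ?thesis using c0_FB c0_NF[OF nf(1-3)] nf(4) by simp
    qed
  next
    case (fb x)
    then have b1: "\<beta> \<in> FB" unfolding FB_def by blast
    show ?thesis using h(2)
    proof (cases rule: Dst_cases)
      case (nf b' L')
      then show ?thesis using c0_FB[OF b1] c0_NF[OF nf(1-3)] by simp
    next
      case fb': (fb y)
      have "x \<noteq> y" using ne fb(2) fb'(2) by blast
      then have "F x \<inter> F y = {}" using Fdisj fb(1) fb'(1) by blast
      then show ?thesis using mt fb(2) fb'(2) by simp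
    qed
  qed
next
  fix \<beta>0 assume "\<beta>0 \<in> FB"
  then obtain x0 where x0: "x0 \<in> V" "\<beta>0 = F x0" unfolding FB_def by blast
  let ?N = "nbhd Dst (one_BIG_adj Dst) (F x0)"
  have noFB: "\<beta> \<notin> FB" if bN0: "\<beta> \<in> ?N" for \<beta>
  proof -
    obtain b L where "b \<in> B" "L \<in> AB" "L \<notin> G" "\<beta> = Th b ` L" using nb_NF[OF x0(1) bN0] by blast
    then show ?thesis using NF_I NF_FB by blast
  qed
  have F0: "F x0 \<in> FB" unfolding FB_def using x0 by blast
  show "inj_on c0 (insert \<beta>0 (nbhd Dst (one_BIG_adj Dst) \<beta>0))"
    unfolding x0(2)
  proof (rule inj_onI)
    fix \<beta> \<beta>' assume h: "\<beta> \<in> insert (F x0) ?N" "\<beta>' \<in> insert (F x0) ?N" "c0 \<beta> = c0 \<beta>'"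
    show "\<beta> = \<beta>'"
    proof (cases "\<beta> = F x0")
      case True
      then have "c0 \<beta>' = None" using h(3) c0_FB[OF F0] by simp
      then have "\<beta>' \<in> FB" unfolding c0_def by (auto split: if_splits)
      then have "\<beta>' = F x0" using h(2) noFB by blast
      then show ?thesis using True by simp
    next
      case False
      then have bN: "\<beta> \<in> ?N" using h(1) by blast
      obtain b L where bL: "b \<in> B" "L \<in> AB" "L \<notin> G" "\<beta> = Th b ` L" "x0 \<in> b" using nb_NF[OF x0(1) bN] by blast
      have cb: "c0 \<beta> = Some (clsD b, L)" using c0_NF[OF bL(1-3)] bL(4) by simp
      show ?thesis
      proof (cases "\<beta>' = F x0")
        case True
        then have "c0 \<beta>' = None" using c0_FB[OF F0] by simp
        then show ?thesis using h(3) cb by simp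
      next
        case False
        then have bN': "\<beta>' \<in> ?N" using h(2) by blast
        obtain b' L' where bL': "b' \<in> B" "L' \<in> AB" "L' \<notin> G" "\<beta>' = Th b' ` L'" "x0 \<in> b'"
          using nb_NF[OF x0(1) bN'] by blast
        have "c0 \<beta>' = Some (clsD b', L')" using c0_NF[OF bL'(1-3)] bL'(4) by simp
        then have e: "clsD b = clsD b'" "L = L'" using h(3) cb by simp_all
        have "b' \<in> clsD b" using clsD(2)[OF bL'(1)] e(1) by simp
        then have "b = b'" using C_disj[OF clsD(1)[OF bL(1)] clsD(2)[OF bL(1)]] bL(5) bL'(5) by blast
        then show ?thesis using bL(4) bL'(4) e(2) by simp
      qed
    qed
  qed
  show "c0 ` insert \<beta>0 (nbhd Dst (one_BIG_adj Dst) \<beta>0) = c0 ` Dst"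
    unfolding x0(2)
  proof (intro equalityI subsetI)
    fix c assume "c \<in> c0 ` insert (F x0) ?N"
    moreover have "insert (F x0) ?N \<subseteq> Dst" using F0 unfolding Dst_def nbhd_def by blast
    ultimately show "c \<in> c0 ` Dst" by blast
  next
    fix c assume "c \<in> c0 ` Dst"
    then obtain \<beta> where \<beta>: "\<beta> \<in> Dst" "c = c0 \<beta>" by blast
    show "c \<in> c0 ` insert (F x0) ?N"
      using \<beta>(1)
    proof (cases rule: Dst_cases)
      case (nf b L)
      have cb: "c = Some (clsD b, L)" using c0_NF[OF nf(1-3)] nf(4) \<beta>(2) by simp
      obtain b' where b': "b' \<in> clsD b" "x0 \<in> b'" using C_cover[OF clsD(1)[OF nf(1)] x0(1)] by blast
      have b'B: "b' \<in> B" using CB[OF clsD(1)[OF nf(1)]] b'(1) by blast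
      have cc: "clsD b' = clsD b" using clsD_uniq[OF clsD(1)[OF nf(1)] b'(1)] .
      have inD: "Th b' ` L \<in> Dst" using NF_I[OF b'B nf(2,3)] unfolding Dst_def by blast
      have "card (Th b' ` L \<inter> F x0) = 1" using K1[OF b'B nf(2,3) b'(2)] .
      then have "Th b' ` L \<inter> F x0 \<noteq> {}" by auto
      then have "F x0 \<inter> Th b' ` L \<noteq> {}" by (simp add: Int_commute)
      moreover have "F x0 \<noteq> Th b' ` L" using NF_not_F[OF b'B nf(2,3) x0(1)] by simp
      moreover have "F x0 \<in> Dst" using F0 unfolding Dst_def by blast
      ultimately have "Th b' ` L \<in> ?N" using inD unfolding nbhd_def adj_iff by blast
      moreover have "c0 (Th b' ` L) = c" using c0_NF[OF b'B nf(2,3)] cc cb by simp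
      ultimately show ?thesis by blast
    next
      case (fb y)
      then have "\<beta> \<in> FB" unfolding FB_def by blast
      then have "c = c0 (F x0)" using c0_FB F0 \<beta>(2) by simp
      then show ?thesis by blast
    qed
  qed
qed

end


lemma exists_Th:
  fixes A :: "'a set" and G :: "'a set set" and b :: "'b set" and F :: "'b \<Rightarrow> 'c set"
  assumes fG: "finite G" and cG: "card G = card b" and fb: "finite b" and Gp: "parallel_class A G"
    and gk: "\<forall>g\<in>G. finite g \<and> card g = k" and Fk: "\<forall>x\<in>b. finite (F x) \<and> card (F x) = k"
    and Fd: "\<forall>x\<in>b. \<forall>y\<in>b. x \<noteq> y \<longrightarrow> F x \<inter> F y = {}"
  shows "\<exists>\<theta>. bij_betw \<theta> A (\<Union>x\<in>b. F x) \<and> (\<forall>g\<in>G. \<exists>x\<in>b. \<theta> ` g = F x)"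
proof -
  obtain \<phi> where \<phi>: "bij_betw \<phi> G b" using finite_same_card_bij[OF fG fb cG] by blast
  have \<phi>in: "\<phi> g \<in> b" if "g \<in> G" for g using bij_betw_apply[OF \<phi> that] .
  have \<phi>inj: "inj_on \<phi> G" using bij_betw_imp_inj_on[OF \<phi>] .
  have \<phi>img: "\<phi> ` G = b" using bij_betw_imp_surj_on[OF \<phi>] .
  have "\<forall>g\<in>G. \<exists>\<psi>. bij_betw \<psi> g (F (\<phi> g))"
  proof
    fix g assume g: "g \<in> G"
    have "finite g" "card g = k" using gk g by blast+
    moreover have "finite (F (\<phi> g))" "card (F (\<phi> g)) = k" using Fk \<phi>in[OF g] by blast+
    ultimately show "\<exists>\<psi>. bij_betw \<psi> g (F (\<phi> g))" by (intro finite_same_card_bij) simp_all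
  qed
  from bchoice[OF this] obtain \<psi> where \<psi>: "\<forall>g\<in>G. bij_betw (\<psi> g) g (F (\<phi> g))" ..
  define gl where "gl a = (THE g. g \<in> G \<and> a \<in> g)" for a
  have gl: "gl a = g" if "g \<in> G" "a \<in> g" for a g
    unfolding gl_def
  proof (rule the_equality)
    show "g \<in> G \<and> a \<in> g" using that by simp
    fix g' assume "g' \<in> G \<and> a \<in> g'"
    then show "g' = g" using Gp that unfolding parallel_class_def by blast
  qed
  have AU: "\<Union>G = A" using Gp unfolding parallel_class_def by simp
  define \<theta> where "\<theta> a = \<psi> (gl a) a" for a
  have img_g: "\<theta> ` g = F (\<phi> g)" if g: "g \<in> G" for g
  proof -
    have "\<theta> ` g = \<psi> g ` g"
    proof (rule image_cong[OF refl])
      fix a assume "a \<in> g"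
      then show "\<theta> a = \<psi> g a" unfolding \<theta>_def using gl[OF g] by simp
    qed
    also have "\<dots> = F (\<phi> g)" using bij_betw_imp_surj_on[OF bspec[OF \<psi> g]] .
    finally show ?thesis .
  qed
  have inj: "inj_on \<theta> A"
  proof (rule inj_onI)
    fix a a' assume a: "a \<in> A" "a' \<in> A" "\<theta> a = \<theta> a'"
    have "a \<in> \<Union>G" using a(1) AU by simp
    then obtain g where g: "g \<in> G" "a \<in> g" by (rule UnionE)
    have "a' \<in> \<Union>G" using a(2) AU by simp
    then obtain g' where g': "g' \<in> G" "a' \<in> g'" by (rule UnionE)
    have "\<theta> a \<in> \<theta> ` g" using g(2) by (rule imageI)
    then have t1: "\<theta> a \<in> F (\<phi> g)" using img_g[OF g(1)] by simp
    have "\<theta> a' \<in> \<theta> ` g'" using g'(2) by (rule imageI)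
    then have t2: "\<theta> a \<in> F (\<phi> g')" using img_g[OF g'(1)] a(3) by simp
    have "g = g'"
    proof (rule ccontr)
      assume ne: "g \<noteq> g'"
      have "\<phi> g \<noteq> \<phi> g'"
      proof
        assume "\<phi> g = \<phi> g'"
        then have "g = g'" using inj_onD[OF \<phi>inj _ g(1) g'(1)] by simp
        then show False using ne by simp
      qed
      then have "F (\<phi> g) \<inter> F (\<phi> g') = {}" using Fd \<phi>in[OF g(1)] \<phi>in[OF g'(1)] by simp
      then show False using t1 t2 by (simp add: disjoint_iff)
    qed
    have e1: "gl a = g" using gl[OF g] .
    have e2: "gl a' = g" using gl[OF g'] \<open>g = g'\<close> by simp
    have ee: "\<psi> g a = \<psi> g a'" using a(3) unfolding \<theta>_def e1 e2 .
    have ij: "inj_on (\<psi> g) g" using bij_betw_imp_inj_on[OF bspec[OF \<psi> g(1)]] .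
    have "a' \<in> g" using g'(2) \<open>g = g'\<close> by simp
    then show "a = a'" using inj_onD[OF ij ee g(2)] by simp
  qed
  have img: "\<theta> ` A = (\<Union>x\<in>b. F x)"
  proof -
    have "\<theta> ` A = \<theta> ` (\<Union>G)" using AU by simp
    also have "\<dots> = (\<Union>g\<in>G. \<theta> ` g)" by (rule image_Union)
    also have "\<dots> = (\<Union>g\<in>G. F (\<phi> g))" using img_g by simp
    also have "\<dots> = (\<Union>x\<in>\<phi> ` G. F x)" by simp
    also have "\<dots> = (\<Union>x\<in>b. F x)" using \<phi>img by simp
    finally show ?thesis .
  qed
  have "bij_betw \<theta> A (\<Union>x\<in>b. F x)" unfolding bij_betw_def using inj img by simp
  moreover have "\<forall>g\<in>G. \<exists>x\<in>b. \<theta> ` g = F x"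
  proof
    fix g assume "g \<in> G"
    then show "\<exists>x\<in>b. \<theta> ` g = F x" using img_g \<phi>in by (intro bexI[of _ "\<phi> g"]) auto
  qed
  ultimately show ?thesis by (intro exI[of _ \<theta>] conjI)
qed

lemma interval_div: assumes "(k::nat) * i \<le> w" "w < k * i + k" shows "w div k = i"
  using assms by (intro div_nat_eqI) auto

theorem theorem3:
  fixes A :: "'a set" and AB :: "'a set set"
    and V :: "'b set" and B :: "'b set set" and k v :: nat
  assumes "affine_plane A AB k"
    and "RBIBD V B v k 1"
  shows "\<exists>(W::nat set) D. RBIBD W D (k * v) k 1 \<and> silver D (one_BIG_adj D)"
proof -
  have dA: "design2 A AB (k^2) k 1" using assms(1) unfolding affine_plane_def .
  interpret ag A AB k using dA by unfold_locales
  obtain G PA where GP: "G \<subseteq> AB" "parallel_class A G" "\<forall>L\<in>AB. L \<notin> G \<longrightarrow> (\<forall>g\<in>G. L \<inter> g \<noteq> {})"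
    "\<Union>PA = AB" "\<forall>\<Pi>\<in>PA. \<Pi> \<noteq> {} \<and> parallel_class A \<Pi>"
    "\<forall>\<Pi>\<in>PA. \<forall>\<Pi>'\<in>PA. \<Pi> \<noteq> \<Pi>' \<longrightarrow> \<Pi> \<inter> \<Pi>' = {}" "G \<in> PA" "card G = k"
    using G_exists by blast
  have dV: "design2 V B v k 1" using assms(2) unfolding RBIBD_def by simp
  obtain P where P: "\<Union>P = B" "\<forall>C\<in>P. C \<noteq> {} \<and> parallel_class V C"
    "\<forall>C\<in>P. \<forall>C'\<in>P. C \<noteq> C' \<longrightarrow> C \<inter> C' = {}"
    using assms(2) unfolding RBIBD_def resolvable_def by blast
  have fV: "finite V" and cV: "card V = v" using dV unfolding design2_def by auto
  obtain idx where idx: "bij_betw idx V {0..<v}" using ex_bij_betw_finite_nat[OF fV] cV by blast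
  have idxlt: "idx x < v" if "x \<in> V" for x using bij_betw_apply[OF idx that] by simp
  have idxinj: "inj_on idx V" using bij_betw_imp_inj_on[OF idx] .
  have idxsurj: "idx ` V = {0..<v}" using bij_betw_imp_surj_on[OF idx] .
  define F where "F x = {k * idx x ..< k * idx x + k}" for x
  define W where "W = {0..<k * v}"
  have k2': "k > 2" using dA unfolding design2_def by auto
  have Wfin: "finite W" unfolding W_def by simp
  have Fsub: "\<forall>x\<in>V. F x \<subseteq> W"
  proof
    fix x assume "x \<in> V"
    then have "idx x + 1 \<le> v" using idxlt by (simp add: Suc_le_eq)
    then have "k * (idx x + 1) \<le> k * v" by (rule mult_le_mono2)
    then show "F x \<subseteq> W" unfolding F_def W_def by auto
  qed
  have Fcard: "\<forall>x\<in>V. card (F x) = k" unfolding F_def by simp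
  have Fmem: "w div k = idx x" if "w \<in> F x" for w x
    using that unfolding F_def by (intro interval_div) auto
  have Fdisj: "\<forall>x\<in>V. \<forall>y\<in>V. x \<noteq> y \<longrightarrow> F x \<inter> F y = {}"
  proof (intro ballI impI equals0I)
    fix x y w assume h: "x \<in> V" "y \<in> V" "x \<noteq> y" "w \<in> F x \<inter> F y"
    then have "idx x = idx y" using Fmem by (metis IntD1 IntD2)
    then show False using inj_onD[OF idxinj _ h(1) h(2)] h(3) by blast
  qed
  have FU: "\<Union>(F ` V) = W"
  proof (intro equalityI subsetI)
    fix w assume "w \<in> \<Union>(F ` V)"
    then show "w \<in> W" using Fsub by blast
  next
    fix w assume "w \<in> W"
    then have "w < k * v" unfolding W_def by simp
    then have "w < v * k" by (simp add: mult.commute)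
    then have "w div k < v" by (rule less_mult_imp_div_less)
    then obtain x where x: "x \<in> V" "idx x = w div k" using idxsurj by (metis atLeastLessThan_iff imageE zero_le)
    have "k * (w div k) \<le> w" by simp
    moreover have "w < k * (w div k) + k" using k2'
      by (metis add.commute div_mult_mod_eq mod_less_divisor mult.commute nat_add_left_cancel_less
          zero_less_numeral less_trans)
    ultimately have "w \<in> F x" unfolding F_def using x(2) by simp
    then show "w \<in> \<Union>(F ` V)" using x(1) by blast
  qed
  have exTh: "\<forall>b\<in>B. \<exists>\<theta>. bij_betw \<theta> A (\<Union>x\<in>b. F x) \<and> (\<forall>g\<in>G. \<exists>x\<in>b. \<theta> ` g = F x)"
  proof
    fix b assume b: "b \<in> B"
    have bV: "b \<subseteq> V" using d2_finite_blocks(3)[OF dV b] .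
    have fb: "finite b" using d2_finite_blocks(5)[OF dV b] .
    have cb: "card b = k" using d2_finite_blocks(4)[OF dV b] .
    have fG: "finite G" using GP(1) d2_finite_blocks(2)[OF dA] finite_subset by blast
    have gk: "\<forall>g\<in>G. finite g \<and> card g = k" using GP(1) d2_finite_blocks(4,5)[OF dA] by blast
    have Fk: "\<forall>x\<in>b. finite (F x) \<and> card (F x) = k" using bV Fcard unfolding F_def by auto
    have Fd: "\<forall>x\<in>b. \<forall>y\<in>b. x \<noteq> y \<longrightarrow> F x \<inter> F y = {}" using bV Fdisj by blast
    show "\<exists>\<theta>. bij_betw \<theta> A (\<Union>x\<in>b. F x) \<and> (\<forall>g\<in>G. \<exists>x\<in>b. \<theta> ` g = F x)"
      using exists_Th[OF fG _ fb GP(2) gk Fk Fd] GP(8) cb by simp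
  qed
  from bchoice[OF this] obtain Th where Th: "\<forall>b\<in>B. bij_betw (Th b) A (\<Union>x\<in>b. F x) \<and> (\<forall>g\<in>G. \<exists>x\<in>b. Th b ` g = F x)"
    ..
  have Thbij: "\<forall>b\<in>B. bij_betw (Th b) A (\<Union>x\<in>b. F x)"
  proof
    fix b assume "b \<in> B"
    from bspec[OF Th this] show "bij_betw (Th b) A (\<Union>x\<in>b. F x)" by (rule conjunct1)
  qed
  have Thfib: "\<forall>b\<in>B. \<forall>g\<in>G. \<exists>x\<in>b. Th b ` g = F x"
  proof
    fix b assume "b \<in> B"
    from bspec[OF Th this] show "\<forall>g\<in>G. \<exists>x\<in>b. Th b ` g = F x" by (rule conjunct2)
  qed
  interpret c: constr A AB k V B v P G PA W F Th
    by unfold_locales (fact dA dV P GP(1-7) Wfin Fsub Fcard Fdisj FU Thbij Thfib)+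
  have "RBIBD W c.Dst (k * v) k 1" unfolding RBIBD_def using c.design_Dst c.resolvable_Dst by simp
  then show ?thesis using c.silver_Dst by blast
qed

end
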